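(* Let $K_0$, $L$, $I$ be positive integers with $K_0\ge3$, $L\ge2$ and $I\ge K_0(K_0+1)/2$. Then $$\Theta(K_0,I)\ge\frac{I^2}{2(K_0+1)}\left(1+\frac{(K_0-1)(K_0+1)}{I}-\frac{K_0(K_0+2)(K_0+1)^2}{12I^2}\right).$$
   Context: For $(k,m)\in\mathbb{N}^2$ put $\|(k,m)\|=k+m$. Define $\Theta(K_0,I)=\min\{\|(k_1,m_1)\|+\cdots+\|(k_I,m_I)\|\}$, the minimum taken over all $I$-tuples of pairwise distinct pairs $(k_1,m_1),\dots,(k_I,m_I)\in\mathbb{N}^2$ with $m_1,\dots,m_I\le K_0$ ($\mathbb{N}$ includes $0$). *)

theory Defs
  imports Complex_Main
begin

text \<open>The set of attainable sums is a nonempty set of naturals, so Inf is its minimum.\<close>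
definition Theta :: "nat \<Rightarrow> nat \<Rightarrow> nat" where
  "Theta K0 I = Inf {(\<Sum>i<I. fst (p i) + snd (p i)) | p :: nat \<Rightarrow> nat \<times> nat.
                      inj_on p {..<I} \<and> (\<forall>i<I. snd (p i) \<le> K0)}"

end

theory Submission imports Defs begin

lemma tri: "2 * (\<Sum>k<M. (M - k)) = M * (M + 1::nat)"
proof (induction M)
  case 0 then show ?case by simp
next
  case (Suc M)
  have "(\<Sum>k<Suc M. (Suc M - k)) = (\<Sum>k<Suc M. (M - k) + 1)"
    by (rule sum.cong) auto
  also have "\<dots> = (\<Sum>k<Suc M. (M - k)) + Suc M" by (simp only: sum.distrib) simp
  also have "(\<Sum>k<Suc M. (M - k)) = (\<Sum>k<M. (M - k))" by simp
  finally show ?case using Suc by simp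
qed

lemma inner: assumes "m \<le> N" shows "2 * (\<Sum>k<N. (N - (k + m))) = (N - m) * (N - m + 1::nat)"
proof -
  have "(\<Sum>k<N. (N - (k + m))) = (\<Sum>k<N - m. ((N - m) - k))"
  proof -
    have "(\<Sum>k<N. (N - (k + m))) = (\<Sum>k<N - m. (N - (k + m))) + (\<Sum>k\<in>{N-m..<N}. (N - (k + m)))"
      by (metis add_0 atLeast0LessThan diff_le_self sum.atLeastLessThan_concat zero_le)
    moreover have "(\<Sum>k\<in>{N-m..<N}. (N - (k + m))) = 0" by auto
    ultimately show ?thesis by (simp add: diff_diff_add add.commute)
  qed
  then show ?thesis using tri[of "N - m"] by simp
qed

lemma outer: assumes "K \<le> N"
  shows "3 * (\<Sum>m\<le>K. real ((N - m) * (N - m + 1))) =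
     real N * (real N + 1) * (real N + 2) - (real N - real K - 1) * (real N - real K) * (real N - real K + 1)"
  using assms
proof (induction K)
  case 0 then show ?case by (simp add: algebra_simps)
next
  case (Suc K)
  have "3 * (\<Sum>m\<le>Suc K. real ((N - m) * (N - m + 1))) = 3 * (\<Sum>m\<le>K. real ((N - m) * (N - m + 1)))
     + 3 * real ((N - Suc K) * (N - Suc K + 1))" by (simp add: algebra_simps)
  also have "real ((N - Suc K) * (N - Suc K + 1)) = (real N - real K - 1) * (real N - real K)"
  proof -
    have e1: "real (N - Suc K) = real N - real K - 1" using Suc.prems by (simp add: of_nat_diff)
    have "real ((N - Suc K) * (N - Suc K + 1)) = real (N - Suc K) * (real (N - Suc K) + 1)" by (simp only: of_nat_mult of_nat_add of_nat_1)
    also have "\<dots> = (real N - real K - 1) * ((real N - real K - 1) + 1)" by (simp only: e1)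
    finally show ?thesis by (simp add: algebra_simps)
  qed
  finally show ?case using Suc by (simp add: algebra_simps)
qed

lemma box: assumes "K \<le> N"
  shows "6 * real (\<Sum>q\<in>{..<N} \<times> {..K}. (N - (fst q + snd q))) =
     real N * (real N + 1) * (real N + 2) - (real N - real K - 1) * (real N - real K) * (real N - real K + 1)"
proof -
  have "(\<Sum>q\<in>{..<N} \<times> {..K}. (N - (fst q + snd q))) = (\<Sum>k<N. \<Sum>m\<le>K. (N - (k + m)))"
    by (simp add: sum.cartesian_product split_def)
  also have "\<dots> = (\<Sum>m\<le>K. \<Sum>k<N. (N - (k + m)))" by (rule sum.swap)
  finally have e: "2 * (\<Sum>q\<in>{..<N} \<times> {..K}. (N - (fst q + snd q))) = (\<Sum>m\<le>K. (N - m) * (N - m + 1))"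
    using inner assms by (simp add: sum_distrib_left)
  have "6 * real (\<Sum>q\<in>{..<N} \<times> {..K}. (N - (fst q + snd q))) = 3 * real (\<Sum>m\<le>K. (N - m) * (N - m + 1))"
    using arg_cong[OF e, of real] by simp
  then show ?thesis using outer[OF assms] by simp
qed

lemma dual:
  fixes p :: "nat \<Rightarrow> nat \<times> nat"
  assumes inj: "inj_on p {..<I}" and bd: "\<forall>i<I. snd (p i) \<le> K"
  shows "N * I \<le> (\<Sum>i<I. fst (p i) + snd (p i)) + (\<Sum>q\<in>{..<N} \<times> {..K}. (N - (fst q + snd q)))"
proof -
  define g where "g = (\<lambda>q::nat\<times>nat. N - (fst q + snd q))"
  have "N * I = (\<Sum>i<I. N)" by simp
  also have "\<dots> \<le> (\<Sum>i<I. (fst (p i) + snd (p i)) + g (p i))"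
    by (rule sum_mono) (simp add: g_def)
  also have "\<dots> = (\<Sum>i<I. fst (p i) + snd (p i)) + (\<Sum>i<I. g (p i))" by (rule sum.distrib)
  also have "(\<Sum>i<I. g (p i)) = (\<Sum>q\<in>p ` {..<I}. g q)"
    using sum.reindex[OF inj, of g] by simp
  also have "\<dots> = (\<Sum>q\<in>p ` {..<I} \<inter> ({..<N} \<times> {..K}). g q)"
  proof (rule sum.mono_neutral_right)
    show "\<forall>q\<in>p ` {..<I} - p ` {..<I} \<inter> ({..<N} \<times> {..K}). g q = 0"
    proof
      fix q assume q: "q \<in> p ` {..<I} - p ` {..<I} \<inter> ({..<N} \<times> {..K})"
      then obtain i where i: "i < I" "q = p i" by auto
      have "snd q \<le> K" using bd i by simp
      moreover have "q \<notin> {..<N} \<times> {..K}" using q i by auto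
      ultimately have "fst q \<ge> N" by (cases q) auto
      then show "g q = 0" by (simp add: g_def)
    qed
  qed auto
  also have "\<dots> \<le> (\<Sum>q\<in>{..<N} \<times> {..K}. g q)"
    by (rule sum_mono2) auto
  finally show ?thesis by (simp add: g_def)
qed

lemma final_ineq:
  fixes k J R x :: real
  assumes k: "k \<ge> 3" and R: "0 \<le> R" "R \<le> k + 1" and J: "J \<ge> 0"
    and x: "x = k * (k + 1) / 2 + (k + 1) * J + R"
    and th: "6 * t \<ge> 6 * (k + J) * x - ((k + J) * (k + J + 1) * (k + J + 2) - (J - 1) * J * (J + 1))"
  shows "t \<ge> x^2 / (2 * (k + 1)) * (1 + (k - 1) * (k + 1) / x - k * (k + 2) * (k + 1)^2 / (12 * x^2))"
proof -
  have "k * (k + 1) / 2 > 0" using k by simp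
  moreover have "(k + 1) * J \<ge> 0" using k J by simp
  ultimately have xpos: "x > 0" using x R by linarith
  define P where "P = 12 * x^2 + 12 * (k * k - 1) * x - k * (k + 2) * (k + 1) * (k + 1)"
  define B where "B = (k + J) * x - ((k + J) * (k + J + 1) * (k + J + 2) - (J - 1) * J * (J + 1)) / 6 - R * (k + 1 - R) / (2 * (k + 1))"
  have s1: "1 + (k - 1) * (k + 1) / x - k * (k + 2) * (k + 1)^2 / (12 * x^2) = P / (12 * x^2)"
    unfolding P_def using xpos by (simp add: field_simps power2_eq_square)
  have e1: "x^2 / (2 * (k + 1)) * (1 + (k - 1) * (k + 1) / x - k * (k + 2) * (k + 1)^2 / (12 * x^2)) = P / (24 * (k + 1))"
    unfolding s1 using xpos k by (simp add: field_simps power2_eq_square)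
  have b24: "24 * (k + 1) * B = 24 * (k + 1) * (k + J) * x - 4 * (k + 1) * ((k + J) * (k + J + 1) * (k + J + 2) - (J - 1) * J * (J + 1)) - 12 * R * (k + 1 - R)"
    unfolding B_def using k by (simp add: field_simps)
  have "P = 24 * (k + 1) * (k + J) * x - 4 * (k + 1) * ((k + J) * (k + J + 1) * (k + J + 2) - (J - 1) * J * (J + 1)) - 12 * R * (k + 1 - R)"
    unfolding P_def x by (simp add: field_simps power2_eq_square)
  hence "24 * (k + 1) * B = P" using b24 by simp
  hence "B = P / (24 * (k + 1))" using k by (simp add: field_simps)
  hence eq: "x^2 / (2 * (k + 1)) * (1 + (k - 1) * (k + 1) / x - k * (k + 2) * (k + 1)^2 / (12 * x^2)) = B"
    using e1 by simp
  define Z where "Z = (k + J) * x - ((k + J) * (k + J + 1) * (k + J + 2) - (J - 1) * J * (J + 1)) / 6"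
  define C where "C = R * (k + 1 - R) / (2 * (k + 1))"
  have C0: "C \<ge> 0" unfolding C_def using R k by simp
  have z6: "6 * Z = 6 * (k + J) * x - ((k + J) * (k + J + 1) * (k + J + 2) - (J - 1) * J * (J + 1))"
    unfolding Z_def by (simp add: algebra_simps)
  have "6 * Z \<le> 6 * t" using th by (simp only: z6)
  hence Zt: "Z \<le> t" by simp
  have "B = Z - C" unfolding B_def Z_def C_def by simp
  then show ?thesis unfolding eq using Zt C0 by linarith
qed

theorem lemma12p2:
  fixes K0 L I :: nat
  assumes "K0 \<ge> 3" and "L \<ge> 2" and "real I \<ge> real K0 * (real K0 + 1) / 2"
  shows "real (Theta K0 I) \<ge> (real I)^2 / (2 * (real K0 + 1)) *
           (1 + (real K0 - 1) * (real K0 + 1) / real I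
              - real K0 * (real K0 + 2) * (real K0 + 1)^2 / (12 * (real I)^2))"
proof -
  define S where "S = {(\<Sum>i<I. fst (p i) + snd (p i)) | p :: nat \<Rightarrow> nat \<times> nat.
                      inj_on p {..<I} \<and> (\<forall>i<I. snd (p i) \<le> K0)}"
  have "(\<Sum>i<I. fst ((\<lambda>i. (i, 0::nat)) i) + snd ((\<lambda>i. (i, 0::nat)) i)) \<in> S"
    unfolding S_def by (intro CollectI exI[of _ "\<lambda>i. (i, 0::nat)"]) (auto simp: inj_on_def)
  hence "S \<noteq> {}" by blast
  hence "Theta K0 I \<in> S" unfolding Theta_def S_def[symmetric] by (rule Inf_nat_def1)
  then obtain p :: "nat \<Rightarrow> nat \<times> nat" where th: "Theta K0 I = (\<Sum>i<I. fst (p i) + snd (p i))"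
    and inj: "inj_on p {..<I}" and bd: "\<forall>i<I. snd (p i) \<le> K0" unfolding S_def by blast
  define a0 where "a0 = K0 * (K0 + 1) div 2"
  have a0: "2 * a0 = K0 * (K0 + 1)" unfolding a0_def by simp
  have "real K0 * (real K0 + 1) \<le> 2 * real I" using assms(3) by simp
  hence "real (K0 * (K0 + 1)) \<le> real (2 * I)" by (simp only: of_nat_mult of_nat_add of_nat_1 of_nat_numeral)
  hence "real (2 * a0) \<le> real (2 * I)" using a0 by simp
  hence Ia: "a0 \<le> I" by linarith
  define j where "j = (I - a0) div (K0 + 1)"
  define r where "r = (I - a0) mod (K0 + 1)"
  have Ieq: "I = a0 + (K0 + 1) * j + r" unfolding j_def r_def using Ia mult_div_mod_eq[of "K0+1" "I-a0"] by linarith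
  have rlt: "r < K0 + 1" unfolding r_def by simp
  define N where "N = K0 + j"
  have d: "N * I \<le> Theta K0 I + (\<Sum>q\<in>{..<N} \<times> {..K0}. (N - (fst q + snd q)))"
    using dual[OF inj bd, of N] th by simp
  have b: "6 * real (\<Sum>q\<in>{..<N} \<times> {..K0}. (N - (fst q + snd q))) =
     real N * (real N + 1) * (real N + 2) - (real N - real K0 - 1) * (real N - real K0) * (real N - real K0 + 1)"
    by (rule box) (simp add: N_def)
  have d': "real N * real I \<le> real (Theta K0 I) + real (\<Sum>q\<in>{..<N} \<times> {..K0}. (N - (fst q + snd q)))"
    using d by (metis of_nat_add of_nat_le_iff of_nat_mult)
  have x: "real I = real K0 * (real K0 + 1) / 2 + (real K0 + 1) * real j + real r"
  proof -
    have ha: "2 * real a0 = real K0 * (real K0 + 1)" using arg_cong[OF a0, of real]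
      by (simp only: of_nat_mult of_nat_add of_nat_1 of_nat_numeral)
    have "real I = real a0 + (real K0 + 1) * real j + real r" using arg_cong[OF Ieq, of real]
      by (simp only: of_nat_mult of_nat_add of_nat_1)
    then show ?thesis using ha by linarith
  qed
  show ?thesis
  proof (rule final_ineq[OF _ _ _ _ x])
    show "3 \<le> real K0" using assms(1) by simp
    show "0 \<le> real r" by simp
    show "real r \<le> real K0 + 1" using rlt by simp
    show "0 \<le> real j" by simp
    show "6 * (real K0 + real j) * real I - ((real K0 + real j) * (real K0 + real j + 1) * (real K0 + real j + 2)
       - (real j - 1) * real j * (real j + 1)) \<le> 6 * real (Theta K0 I)"
      using d' b unfolding N_def by (simp add: algebra_simps)
  qed
qed

end
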